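(* For every positive integer $n$, $$\sum_{\mathbf a\in\mathsf{PF}_n} t^{\operatorname{run}(\mathbf a)}=\sum_{\mathbf a\in\mathsf{RW}_n} t^{\operatorname{run}(\mathbf a)}.$$
   Context: Let $[n]=\{1,\dots,n\}$ and $\mathbf a=(a_1,\dots,a_n)\in[n]^n$. If $1\in\{a_1,\dots,a_n\}$, $\operatorname{run}(\mathbf a)=\max\{i\in[n]:[i]\subseteq\{a_1,\dots,a_n\}\}$; otherwise $\operatorname{run}(\mathbf a)=0$. $\mathsf{PF}_n$ is the set of $\mathbf a\in[n]^n$ with $|\{j:a_j\le i\}|\ge i$ for all $i\in[n]$ (parking functions). $\mathsf{RW}_n$ is the set of rook words: $\mathbf a\in[n]^n$ with $a_1\le\operatorname{run}(\mathbf a)$. *)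

theory Defs
  imports Main "HOL-Library.FuncSet"
begin

text \<open>Words a = (a_1,...,a_n) in [n]^n are represented as functions on {1..n}
  with values in {1..n}, undefined outside {1..n} (extensional functions).\<close>

definition words :: "nat \<Rightarrow> (nat \<Rightarrow> nat) set" where
  "words n = ({1..n} \<rightarrow>\<^sub>E {1..n})"

definition run :: "nat \<Rightarrow> (nat \<Rightarrow> nat) \<Rightarrow> nat" where
  "run n a = (if 1 \<in> a ` {1..n}
              then Max {i \<in> {1..n}. {1..i} \<subseteq> a ` {1..n}}
              else 0)"

definition PF :: "nat \<Rightarrow> (nat \<Rightarrow> nat) set" where
  "PF n = {a \<in> words n. \<forall>i \<in> {1..n}. card {j \<in> {1..n}. a j \<le> i} \<ge> i}"

definition RW :: "nat \<Rightarrow> (nat \<Rightarrow> nat) set" where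
  "RW n = {a \<in> words n. a 1 \<le> run n a}"

end

theory Submission
  imports Defs
begin

primrec runmin :: "(nat \<Rightarrow> int) \<Rightarrow> nat \<Rightarrow> int" where
  "runmin F 0 = F 0"
| "runmin F (Suc x) = min (runmin F x) (F (Suc x))"

lemma runmin_le: "j \<le> x \<Longrightarrow> runmin F x \<le> F j"
proof (induction x)
  case 0 then show ?case by simp
next
  case (Suc x)
  then show ?case by (cases "j = Suc x") auto
qed

lemma runmin_attained: "\<exists>j\<le>x. runmin F x = F j"
proof (induction x)
  case 0 then show ?case by simp
next
  case (Suc x)
  then obtain j where "j \<le> x" "runmin F x = F j" by blast
  then show ?case by (cases "runmin F x \<le> F (Suc x)") (auto simp: min_def intro: le_SucI)
qed

lemma runmin_rec_iff: "runmin F (Suc x) < runmin F x \<longleftrightarrow> (\<forall>j\<le>x. F (Suc x) < F j)"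
proof
  assume "runmin F (Suc x) < runmin F x"
  then have "F (Suc x) < runmin F x" by (simp add: min_def split: if_splits)
  then show "\<forall>j\<le>x. F (Suc x) < F j" using runmin_le by (meson less_le_trans)
next
  assume "\<forall>j\<le>x. F (Suc x) < F j"
  moreover obtain j where "j \<le> x" "runmin F x = F j" using runmin_attained by blast
  ultimately show "runmin F (Suc x) < runmin F x" by (auto simp: min_def)
qed

lemma runmin_count:
  assumes step: "\<And>x. F (Suc x) \<ge> F x - 1" and "A \<le> B"
  shows "int (card {T \<in> {A<..B}. runmin F T < runmin F (T - 1)}) = runmin F A - runmin F B"
  using assms(2)
proof (induction B)
  case 0 then show ?case by simp
next
  case (Suc B)
  show ?case
  proof (cases "A = Suc B")
    case True then show ?thesis by simp
  next
    case False
    then have AB: "A \<le> B" using Suc.prems by simp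
    have eq: "{T \<in> {A<..Suc B}. runmin F T < runmin F (T - 1)} =
      {T \<in> {A<..B}. runmin F T < runmin F (T - 1)} \<union>
      (if runmin F (Suc B) < runmin F B then {Suc B} else {})"
      using AB by (auto simp: le_Suc_eq)
    have lo: "runmin F (Suc B) \<ge> runmin F B - 1"
    proof -
      have "F (Suc B) \<ge> F B - 1" by (rule step)
      moreover have "F B \<ge> runmin F B" using runmin_le by simp
      ultimately show ?thesis by (simp add: min_def)
    qed
    have up: "runmin F (Suc B) \<le> runmin F B" by simp
    show ?thesis
    proof (cases "runmin F (Suc B) < runmin F B")
      case True
      have "card {T \<in> {A<..Suc B}. runmin F T < runmin F (T - 1)} =
        Suc (card {T \<in> {A<..B}. runmin F T < runmin F (T - 1)})"
        unfolding eq using True by (simp add: card_insert_if)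
      then show ?thesis using Suc.IH[OF AB] True lo by simp
    next
      case False
      then show ?thesis using Suc.IH[OF AB] eq up by simp
    qed
  qed
qed

lemma hitting:
  fixes mu :: "nat \<Rightarrow> nat" and L h :: nat
  assumes L: "L > 0"
    and tot: "(\<Sum>y<L. mu y) + h = L"
  defines "PP \<equiv> (\<lambda>x. \<Sum>y<x. mu (y mod L))"
  shows "card {d \<in> {..<L}. mu d = 0 \<and> (\<forall>u\<in>{1..L}. int (PP (d+u)) - int (PP d) + int h \<ge> int u)} = h"
proof -
  define F where "F = (\<lambda>x. int (PP x) - int x)"
  have PPL: "PP L + h = L" using tot unfolding PP_def by simp
  have PPper: "PP (x + L) = PP x + PP L" for x
  proof (induction x)
    case 0 then show ?case unfolding PP_def by simp
  next
    case (Suc x)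
    have "PP (Suc x + L) = PP (x + L) + mu ((x + L) mod L)" unfolding PP_def by simp
    also have "\<dots> = PP x + PP L + mu (x mod L)" using Suc by simp
    also have "\<dots> = PP (Suc x) + PP L" unfolding PP_def by simp
    finally show ?case .
  qed
  have Fper: "F (x + L) = F x - int h" for x
    unfolding F_def using PPper[of x] PPL by simp
  have Fsuc: "F (Suc x) = F x + int (mu (x mod L)) - 1" for x
    unfolding F_def PP_def by simp
  have step: "F (Suc x) \<ge> F x - 1" for x using Fsuc[of x] by simp
  have key: "(mu d = 0 \<and> (\<forall>u\<in>{1..L}. int (PP (d+u)) - int (PP d) + int h \<ge> int u))
     \<longleftrightarrow> runmin F (Suc (d + L)) < runmin F (d + L)" if dL: "d < L" for d
  proof -
    have Fd1: "F (Suc d) = F d + int (mu d) - 1" using Fsuc[of d] dL by simp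
    have cond: "(\<forall>u\<in>{1..L}. int (PP (d+u)) - int (PP d) + int h \<ge> int u) \<longleftrightarrow>
          (\<forall>u\<in>{1..L}. F (d+u) \<ge> F d - int h)"
      unfolding F_def by auto
    have FdL1: "F (Suc (d + L)) = F (Suc d) - int h" using Fper[of "Suc d"] by simp
    have FdL: "F (d + L) = F d - int h" using Fper[of d] by simp
    show ?thesis
      unfolding cond runmin_rec_iff
    proof
      assume A: "mu d = 0 \<and> (\<forall>u\<in>{1..L}. F d - int h \<le> F (d + u))"
      show "\<forall>j\<le>d + L. F (Suc (d + L)) < F j"
      proof (intro allI impI)
        fix j assume j: "j \<le> d + L"
        show "F (Suc (d + L)) < F j"
        proof (cases "j \<ge> Suc d")
          case True
          then have "j - d \<in> {1..L}" using j by auto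
          then have "F d - int h \<le> F (d + (j - d))" using A by blast
          then show ?thesis using True FdL1 Fd1 A by simp
        next
          case False
          then have "j + L - d \<in> {1..L}" using dL by auto
          then have "F d - int h \<le> F (d + (j + L - d))" using A by blast
          moreover have "d + (j + L - d) = j + L" using dL by simp
          ultimately have "F d - int h \<le> F (j + L)" by simp
          then show ?thesis using Fper[of j] FdL1 Fd1 A by simp
        qed
      qed
    next
      assume B: "\<forall>j\<le>d + L. F (Suc (d + L)) < F j"
      have "F (Suc (d + L)) < F (d + L)" using B by simp
      then have mu0: "mu d = 0" using FdL1 FdL Fd1 by simp
      show "mu d = 0 \<and> (\<forall>u\<in>{1..L}. F d - int h \<le> F (d + u))"
      proof (intro conjI ballI mu0)
        fix u assume "u \<in> {1..L}"
        then have "F (Suc (d + L)) < F (d + u)" using B by simp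
        then show "F d - int h \<le> F (d + u)" using FdL1 Fd1 mu0 by simp
      qed
    qed
  qed
  have "card {d \<in> {..<L}. mu d = 0 \<and> (\<forall>u\<in>{1..L}. int (PP (d+u)) - int (PP d) + int h \<ge> int u)}
      = card {d \<in> {..<L}. runmin F (Suc (d + L)) < runmin F (d + L)}"
    using key by (intro arg_cong[where f=card]) auto
  also have "\<dots> = card ((\<lambda>d. Suc (d + L)) ` {d \<in> {..<L}. runmin F (Suc (d + L)) < runmin F (d + L)})"
    by (rule card_image[symmetric]) (auto simp: inj_on_def)
  also have "(\<lambda>d. Suc (d + L)) ` {d \<in> {..<L}. runmin F (Suc (d + L)) < runmin F (d + L)}
      = {T \<in> {L<..L+L}. runmin F T < runmin F (T - 1)}"
  proof (rule set_eqI, rule iffI)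
    fix T assume "T \<in> (\<lambda>d. Suc (d + L)) ` {d \<in> {..<L}. runmin F (Suc (d + L)) < runmin F (d + L)}"
    then show "T \<in> {T \<in> {L<..L+L}. runmin F T < runmin F (T - 1)}" by auto
  next
    fix T assume T: "T \<in> {T \<in> {L<..L+L}. runmin F T < runmin F (T - 1)}"
    define d where "d = T - Suc L"
    have Td: "T = Suc (d + L)" "d < L" using T unfolding d_def by auto
    have "runmin F (Suc (d + L)) < runmin F (d + L)"
      using T unfolding Td(1) by (simp del: runmin.simps)
    then show "T \<in> (\<lambda>d. Suc (d + L)) ` {d \<in> {..<L}. runmin F (Suc (d + L)) < runmin F (d + L)}"
      using Td by blast
  qed
  finally have c1: "int (card {d \<in> {..<L}. mu d = 0 \<and> (\<forall>u\<in>{1..L}. int (PP (d+u)) - int (PP d) + int h \<ge> int u)})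
      = runmin F L - runmin F (L + L)"
    using runmin_count[of F L "L+L", OF step] by simp
  have "runmin F (L + L) = runmin F L - int h"
  proof (rule antisym)
    obtain j0 where j0: "j0 \<le> L" "runmin F L = F j0" using runmin_attained by blast
    have "runmin F (L + L) \<le> F (j0 + L)" using j0 by (intro runmin_le) simp
    then show "runmin F (L + L) \<le> runmin F L - int h" using j0 Fper[of j0] by simp
  next
    obtain j1 where j1: "j1 \<le> L + L" "runmin F (L + L) = F j1" using runmin_attained by blast
    show "runmin F L - int h \<le> runmin F (L + L)"
    proof (cases "j1 \<le> L")
      case True
      then show ?thesis using j1 runmin_le[of j1 L F] by simp
    next
      case False
      then have "j1 = (j1 - L) + L" "j1 - L \<le> L" using j1 by auto
      then have "F j1 = F (j1 - L) - int h" using Fper[of "j1 - L"] by simp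
      then show ?thesis using j1 runmin_le[of "j1 - L" L F] \<open>j1 - L \<le> L\<close> by simp
    qed
  qed
  then show ?thesis using c1 by simp
qed

definition gv :: "nat \<Rightarrow> nat \<Rightarrow> nat \<Rightarrow> nat \<Rightarrow> nat" where
  "gv n r d v = (if v \<le> r then v else Suc r + ((v - Suc r + (n - r - d)) mod (n - r)))"

definition rot :: "nat \<Rightarrow> nat \<Rightarrow> nat \<Rightarrow> (nat \<Rightarrow> nat) \<Rightarrow> (nat \<Rightarrow> nat)" where
  "rot n r d a = restrict (\<lambda>i. gv n r d (a i)) {1..n}"

definition Om :: "nat \<Rightarrow> nat \<Rightarrow> (nat \<Rightarrow> nat) set" where
  "Om n r = {a \<in> words n. {1..r} \<subseteq> a ` {1..n}}"

lemma modkey: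
  fixes x d t L :: nat
  assumes "x < L" "d < L" "t < L"
  shows "(x + (L - d)) mod L = t \<longleftrightarrow> x = (t + d) mod L"
proof (cases "d \<le> x")
  case True
  have "(x + (L - d)) mod L = (x - d) mod L"
    using True assms by (simp add: le_mod_geq)
  also have "\<dots> = x - d" using assms by simp
  finally have e1: "(x + (L - d)) mod L = x - d" .
  show ?thesis
  proof (cases "t + d < L")
    case True
    then show ?thesis using e1 \<open>d \<le> x\<close> by auto
  next
    case False
    then have "(t + d) mod L = t + d - L" using assms by (simp add: le_mod_geq)
    then show ?thesis using e1 \<open>d \<le> x\<close> False assms by auto
  qed
next
  case False
  have e1: "(x + (L - d)) mod L = x + (L - d)" using False assms by simp
  show ?thesis
  proof (cases "t + d < L")
    case True
    then show ?thesis using e1 False assms by auto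
  next
    case c2: False
    then have "(t + d) mod L = t + d - L" using assms by (simp add: le_mod_geq)
    then show ?thesis using e1 False c2 assms by auto
  qed
qed

lemma words_range: "a \<in> words n \<Longrightarrow> i \<in> {1..n} \<Longrightarrow> a i \<in> {1..n}"
  unfolding words_def by auto

lemma words_finite: "finite (words n)"
  unfolding words_def by (intro finite_PiE) auto

lemma gv_range: "r < n \<Longrightarrow> v \<in> {1..n} \<Longrightarrow> gv n r d v \<in> {1..n}"
proof -
  assume rn: "r < n" and v: "v \<in> {1..n}"
  have H: "Suc r + x mod (n - r) \<le> n" for x
  proof -
    have "x mod (n - r) < n - r" using rn by simp
    then show ?thesis by linarith
  qed
  show ?thesis
  proof (cases "v \<le> r")
    case True then show ?thesis using v unfolding gv_def by simp
  next
    case False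
    then have "gv n r d v = Suc r + (v - Suc r + (n - r - d)) mod (n - r)" unfolding gv_def by simp
    then show ?thesis using H[of "v - Suc r + (n - r - d)"] by simp
  qed
qed

lemma gv_small: "gv n r d v \<le> r \<longleftrightarrow> v \<le> r"
  unfolding gv_def by auto

lemma gv_smallid: "v \<le> r \<Longrightarrow> gv n r d v = v"
  unfolding gv_def by auto

lemma gv_eq:
  assumes "d < n - r" "v \<in> {1..n}" "t < n - r"
  shows "gv n r d v = Suc r + t \<longleftrightarrow> v = Suc r + ((t + d) mod (n - r))"
proof (cases "v \<le> r")
  case True
  then show ?thesis unfolding gv_def by auto
next
  case False
  then have x: "v - Suc r < n - r" using assms by auto
  have "gv n r d v = Suc r + t \<longleftrightarrow> (v - Suc r + (n - r - d)) mod (n - r) = t"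
    using False unfolding gv_def by auto
  also have "\<dots> \<longleftrightarrow> v - Suc r = (t + d) mod (n - r)"
    using modkey[OF x assms(1) assms(3)] .
  also have "\<dots> \<longleftrightarrow> v = Suc r + ((t + d) mod (n - r))" using False by auto
  finally show ?thesis .
qed

lemma gv_inj:
  assumes rn: "r < n" and dL: "d < n - r"
  shows "inj_on (gv n r d) {1..n}"
proof (rule inj_onI)
  fix x y assume x: "x \<in> {1..n}" and y: "y \<in> {1..n}" and eq: "gv n r d x = gv n r d y"
  show "x = y"
  proof (cases "x \<le> r")
    case True
    then have "gv n r d y \<le> r" using eq gv_small by metis
    then have "y \<le> r" using gv_small by metis
    then show ?thesis using eq True gv_smallid by metis
  next
    case False
    then have "\<not> y \<le> r" using eq gv_small by metis
    define t where "t = (x - Suc r + (n - r - d)) mod (n - r)"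
    have t: "t < n - r" unfolding t_def using rn by simp
    have gx: "gv n r d x = Suc r + t" using False unfolding gv_def t_def by simp
    have "x = Suc r + ((t + d) mod (n - r))" using gv_eq[OF dL x t] gx by simp
    moreover have "y = Suc r + ((t + d) mod (n - r))" using gv_eq[OF dL y t] gx eq by simp
    ultimately show ?thesis by simp
  qed
qed

lemma rot_app: "i \<in> {1..n} \<Longrightarrow> rot n r d a i = gv n r d (a i)"
  unfolding rot_def by simp

lemma rot_words: "a \<in> words n \<Longrightarrow> r < n \<Longrightarrow> rot n r d a \<in> words n"
  unfolding rot_def words_def using gv_range by (auto simp: PiE_iff)

lemma rot_inj:
  assumes "r < n" "d < n - r"
  shows "inj_on (rot n r d) (words n)"
proof (rule inj_onI)
  fix a b assume a: "a \<in> words n" and b: "b \<in> words n" and eq: "rot n r d a = rot n r d b"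
  show "a = b"
  proof (rule PiE_ext[OF a[unfolded words_def] b[unfolded words_def]])
    fix i assume i: "i \<in> {1..n}"
    have "gv n r d (a i) = gv n r d (b i)" using eq rot_app[OF i] by metis
    then show "a i = b i"
      using inj_onD[OF gv_inj[OF assms]] words_range[OF a i] words_range[OF b i] by blast
  qed
qed

lemma rot_img: "rot n r d a ` {1..n} = gv n r d ` (a ` {1..n})"
  using rot_app by (auto simp: image_iff)

lemma rot_Om: "a \<in> Om n r \<Longrightarrow> r < n \<Longrightarrow> rot n r d a \<in> Om n r"
proof -
  assume a: "a \<in> Om n r" and rn: "r < n"
  have "{1..r} \<subseteq> gv n r d ` (a ` {1..n})"
  proof
    fix u assume u: "u \<in> {1..r}"
    then have "u \<in> a ` {1..n}" using a unfolding Om_def by auto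
    moreover have "gv n r d u = u" using u gv_smallid by auto
    ultimately show "u \<in> gv n r d ` (a ` {1..n})" by force
  qed
  then have "{1..r} \<subseteq> rot n r d a ` {1..n}" unfolding rot_img .
  moreover have "rot n r d a \<in> words n" using a rot_words[of a n r d] rn unfolding Om_def by auto
  ultimately show ?thesis unfolding Om_def by blast
qed

lemma Om_finite: "finite (Om n r)"
  unfolding Om_def using words_finite by simp

lemma rot_bij:
  assumes "r < n" "d < n - r"
  shows "bij_betw (rot n r d) (Om n r) (Om n r)"
proof -
  have inj: "inj_on (rot n r d) (Om n r)"
    using rot_inj[OF assms] by (rule inj_on_subset) (auto simp: Om_def)
  have "rot n r d ` Om n r = Om n r"
    using Om_finite inj rot_Om assms(1) by (intro endo_inj_surj) auto
  then show ?thesis using inj unfolding bij_betw_def by simp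
qed

lemma card_filter_sum: "finite A \<Longrightarrow> card {x\<in>A. P x} = (\<Sum>x\<in>A. if P x then 1 else 0)"
  using sum.inter_filter[of A "\<lambda>_. 1::nat" P] by simp

lemma double_count:
  assumes rn: "r < n" and P: "P \<subseteq> Om n r"
  shows "(\<Sum>a\<in>Om n r. card {d \<in> {..<n-r}. rot n r d a \<in> P}) = (n - r) * card P"
proof -
  have "(\<Sum>a\<in>Om n r. card {d \<in> {..<n-r}. rot n r d a \<in> P})
      = (\<Sum>a\<in>Om n r. \<Sum>d<n-r. if rot n r d a \<in> P then 1 else 0)"
    by (rule sum.cong[OF refl], rule card_filter_sum) simp
  also have "\<dots> = (\<Sum>d<n-r. \<Sum>a\<in>Om n r. if rot n r d a \<in> P then 1 else 0)"
    by (rule sum.swap)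
  also have "\<dots> = (\<Sum>d<n-r. card P)"
  proof (rule sum.cong[OF refl])
    fix d assume "d \<in> {..<n-r}"
    then have dL: "d < n - r" by simp
    have bij: "bij_betw (rot n r d) (Om n r) (Om n r)" by (rule rot_bij[OF rn dL])
    have "(\<Sum>a\<in>Om n r. if rot n r d a \<in> P then 1 else 0) = card {a \<in> Om n r. rot n r d a \<in> P}"
      using Om_finite by (rule card_filter_sum[symmetric])
    also have "\<dots> = card (rot n r d ` {a \<in> Om n r. rot n r d a \<in> P})"
      by (rule card_image[symmetric], rule inj_on_subset[OF bij_betw_imp_inj_on[OF bij]]) auto
    also have "rot n r d ` {a \<in> Om n r. rot n r d a \<in> P} = P"
    proof
      show "rot n r d ` {a \<in> Om n r. rot n r d a \<in> P} \<subseteq> P" by auto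
    next
      show "P \<subseteq> rot n r d ` {a \<in> Om n r. rot n r d a \<in> P}"
      proof
        fix p assume p: "p \<in> P"
        then have "p \<in> rot n r d ` Om n r" using P bij by (simp add: bij_betw_def subset_iff)
        then obtain a where "a \<in> Om n r" "p = rot n r d a" by blast
        then show "p \<in> rot n r d ` {a \<in> Om n r. rot n r d a \<in> P}" using p by blast
      qed
    qed
    finally show "(\<Sum>a\<in>Om n r. if rot n r d a \<in> P then 1 else 0) = card P" .
  qed
  also have "\<dots> = (n - r) * card P" by simp
  finally show ?thesis .
qed

definition kk :: "nat \<Rightarrow> nat \<Rightarrow> (nat \<Rightarrow> nat) \<Rightarrow> nat" where
  "kk n r a = card {i \<in> {1..n}. a i \<le> r}"

definition mu :: "nat \<Rightarrow> nat \<Rightarrow> (nat \<Rightarrow> nat) \<Rightarrow> nat \<Rightarrow> nat" where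
  "mu n r a y = card {j \<in> {1..n}. a j = Suc r + y}"

definition PP :: "nat \<Rightarrow> nat \<Rightarrow> (nat \<Rightarrow> nat) \<Rightarrow> nat \<Rightarrow> nat" where
  "PP n r a x = (\<Sum>y<x. mu n r a (y mod (n - r)))"

lemma run_ge:
  assumes a: "a \<in> words n" and r1: "1 \<le> r" and rn: "r \<le> n"
  shows "r \<le> run n a \<longleftrightarrow> {1..r} \<subseteq> a ` {1..n}"
proof -
  define S where "S = a ` {1..n}"
  define I where "I = {i \<in> {1..n}. {1..i} \<subseteq> S}"
  have fI: "finite I" unfolding I_def by simp
  show ?thesis
  proof
    assume H: "r \<le> run n a"
    have "1 \<in> S"
    proof (rule ccontr)
      assume "1 \<notin> S"
      then have "run n a = 0" unfolding run_def S_def by simp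
      then show False using H r1 by simp
    qed
    then have runI: "run n a = Max I" unfolding run_def S_def I_def by simp
    have "1 \<in> I" using \<open>1 \<in> S\<close> r1 rn unfolding I_def by auto
    then have "Max I \<in> I" using fI Max_in by blast
    then have "{1..Max I} \<subseteq> S" unfolding I_def by simp
    then show "{1..r} \<subseteq> a ` {1..n}" using H runI unfolding S_def by auto
  next
    assume H: "{1..r} \<subseteq> a ` {1..n}"
    then have "1 \<in> S" using r1 unfolding S_def by auto
    then have runI: "run n a = Max I" unfolding run_def S_def I_def by simp
    have "r \<in> I" using H r1 rn unfolding I_def S_def by auto
    then show "r \<le> run n a" using runI fI by simp
  qed
qed

lemma run_eq:
  assumes a: "a \<in> words n" and r1: "1 \<le> r" and rn: "r < n"
  shows "run n a = r \<longleftrightarrow> {1..r} \<subseteq> a ` {1..n} \<and> Suc r \<notin> a ` {1..n}"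
proof -
  have A: "r \<le> run n a \<longleftrightarrow> {1..r} \<subseteq> a ` {1..n}" using run_ge[OF a r1] rn by simp
  have B: "Suc r \<le> run n a \<longleftrightarrow> {1..Suc r} \<subseteq> a ` {1..n}" using run_ge[OF a _ ] rn by simp
  have C: "{1..Suc r} = insert (Suc r) {1..r}" by auto
  show ?thesis using A B unfolding C by auto
qed

lemma card_small:
  assumes a: "a \<in> words n" and H: "{1..r} \<subseteq> a ` {1..n}" and i: "i \<le> r"
  shows "i \<le> card {j \<in> {1..n}. a j \<le> i}"
proof -
  have "{1..i} \<subseteq> a ` {j \<in> {1..n}. a j \<le> i}"
  proof
    fix u assume u: "u \<in> {1..i}"
    then have "u \<in> a ` {1..n}" using H i by auto
    then obtain j where "j \<in> {1..n}" "u = a j" by blast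
    then show "u \<in> a ` {j \<in> {1..n}. a j \<le> i}" using u by auto
  qed
  then have "card {1..i} \<le> card (a ` {j \<in> {1..n}. a j \<le> i})" by (intro card_mono) auto
  also have "\<dots> \<le> card {j \<in> {1..n}. a j \<le> i}" by (intro card_image_le) auto
  finally show ?thesis by simp
qed

lemma rot_hit:
  assumes a: "a \<in> words n" and rn: "r < n" and dL: "d < n - r"
  shows "Suc r \<in> rot n r d a ` {1..n} \<longleftrightarrow> Suc r + d \<in> a ` {1..n}"
proof -
  have "Suc r \<in> rot n r d a ` {1..n} \<longleftrightarrow> (\<exists>j\<in>{1..n}. gv n r d (a j) = Suc r + 0)"
    unfolding rot_img image_image by (auto intro: rev_image_eqI)
  also have "\<dots> \<longleftrightarrow> (\<exists>j\<in>{1..n}. a j = Suc r + ((0 + d) mod (n - r)))"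
  proof -
    have "gv n r d (a j) = Suc r + 0 \<longleftrightarrow> a j = Suc r + ((0 + d) mod (n - r))" if j: "j \<in> {1..n}" for j
      by (rule gv_eq[OF dL words_range[OF a j]]) (use dL in simp)
    then show ?thesis by blast
  qed
  also have "\<dots> \<longleftrightarrow> (\<exists>j\<in>{1..n}. a j = Suc r + d)" using dL by simp
  also have "\<dots> \<longleftrightarrow> Suc r + d \<in> a ` {1..n}" by (metis (no_types, lifting) imageE image_eqI)
  finally show ?thesis .
qed

lemma cnt:
  assumes a: "a \<in> Om n r" and rn: "r < n" and dL: "d < n - r"
  shows "t \<le> n - r \<Longrightarrow> card {j \<in> {1..n}. rot n r d a j \<le> r + t} + PP n r a d = kk n r a + PP n r a (d + t)"
proof (induction t)
  case 0
  have "{j \<in> {1..n}. rot n r d a j \<le> r} = {j \<in> {1..n}. a j \<le> r}"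
    using rot_app gv_small by auto
  then show ?case unfolding kk_def by simp
next
  case (Suc t)
  then have t: "t < n - r" by simp
  have aw: "a \<in> words n" using a unfolding Om_def by simp
  have split: "{j \<in> {1..n}. rot n r d a j \<le> r + Suc t} =
      {j \<in> {1..n}. rot n r d a j \<le> r + t} \<union> {j \<in> {1..n}. rot n r d a j = Suc r + t}"
    by auto
  have eqB: "{j \<in> {1..n}. rot n r d a j = Suc r + t} = {j \<in> {1..n}. a j = Suc r + ((t + d) mod (n - r))}"
  proof -
    have "rot n r d a j = Suc r + t \<longleftrightarrow> a j = Suc r + ((t + d) mod (n - r))" if j: "j \<in> {1..n}" for j
      using rot_app[OF j] gv_eq[OF dL words_range[OF aw j] t] by simp
    then show ?thesis by blast
  qed
  have "card {j \<in> {1..n}. rot n r d a j \<le> r + Suc t} =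
      card {j \<in> {1..n}. rot n r d a j \<le> r + t} + card {j \<in> {1..n}. rot n r d a j = Suc r + t}"
    unfolding split by (rule card_Un_disjoint) auto
  also have "card {j \<in> {1..n}. rot n r d a j = Suc r + t} = mu n r a ((d + t) mod (n - r))"
    unfolding eqB mu_def by (simp add: add.commute)
  finally have c: "card {j \<in> {1..n}. rot n r d a j \<le> r + Suc t} =
      card {j \<in> {1..n}. rot n r d a j \<le> r + t} + mu n r a ((d + t) mod (n - r))" .
  have p: "PP n r a (d + Suc t) = PP n r a (d + t) + mu n r a ((d + t) mod (n - r))"
    unfolding PP_def by simp
  have IH: "card {j \<in> {1..n}. rot n r d a j \<le> r + t} + PP n r a d = kk n r a + PP n r a (d + t)"
    using Suc.IH[OF less_imp_le[OF t]] .
  show ?case using IH c p by linarith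
qed

lemma notin_img_iff: "(y \<notin> f ` A) = ({j \<in> A. f j = y} = {})"
  by auto

lemma gap_count:
  assumes S: "S \<subseteq> {1..n}" and R: "{1..r} \<subseteq> S" and rn: "r < n"
  shows "card {d \<in> {..<n-r}. Suc r + d \<notin> S} = n - card S"
proof -
  have img: "(\<lambda>d. Suc r + d) ` {d \<in> {..<n-r}. Suc r + d \<notin> S} = {Suc r..n} - S"
  proof (rule set_eqI, rule iffI)
    fix x assume "x \<in> (\<lambda>d. Suc r + d) ` {d \<in> {..<n-r}. Suc r + d \<notin> S}"
    then show "x \<in> {Suc r..n} - S" by auto
  next
    fix x assume x: "x \<in> {Suc r..n} - S"
    then have "x = Suc r + (x - Suc r)" "x - Suc r \<in> {d \<in> {..<n-r}. Suc r + d \<notin> S}" by auto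
    then show "x \<in> (\<lambda>d. Suc r + d) ` {d \<in> {..<n-r}. Suc r + d \<notin> S}" by blast
  qed
  have "card {d \<in> {..<n-r}. Suc r + d \<notin> S} = card ((\<lambda>d. Suc r + d) ` {d \<in> {..<n-r}. Suc r + d \<notin> S})"
    by (rule card_image[symmetric]) (auto simp: inj_on_def)
  also have "\<dots> = card ({Suc r..n} - S)" unfolding img ..
  also have "\<dots> = card {Suc r..n} - card ({Suc r..n} \<inter> S)"
    by (rule card_Diff_subset_Int) simp
  finally have c1: "card {d \<in> {..<n-r}. Suc r + d \<notin> S} = (n - r) - card ({Suc r..n} \<inter> S)" by simp
  have "S = {1..r} \<union> ({Suc r..n} \<inter> S)" using S R by auto
  then have "card S = card {1..r} + card ({Suc r..n} \<inter> S)"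
    by (metis card_Un_disjoint finite_Int finite_atLeastAtMost disjoint_iff atLeastAtMost_iff
        IntE not_less_eq_eq)
  then have "card S = r + card ({Suc r..n} \<inter> S)" by simp
  then show ?thesis using c1 by simp
qed

lemma PF_count:
  assumes r1: "1 \<le> r" and rn: "r < n" and a: "a \<in> Om n r"
  shows "card {d \<in> {..<n-r}. rot n r d a \<in> {b \<in> PF n. run n b = r}} = kk n r a - r"
proof -
  have aw: "a \<in> words n" and Sa: "{1..r} \<subseteq> a ` {1..n}" using a unfolding Om_def by auto
  have kr: "r \<le> kk n r a" using card_small[OF aw Sa le_refl] unfolding kk_def .
  have kn: "kk n r a \<le> n"
  proof -
    have "kk n r a \<le> card {1..n}" unfolding kk_def by (intro card_mono) auto
    then show ?thesis by simp
  qed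
  define h where "h = kk n r a - r"
  have L0: "0 < n - r" using rn by simp
  have bw0: "rot n r 0 a \<in> words n" using rot_words[OF aw rn] .
  have all: "{j \<in> {1..n}. rot n r 0 a j \<le> r + (n - r)} = {1..n}"
    using words_range[OF bw0] rn by auto
  have c0: "card {j \<in> {1..n}. rot n r 0 a j \<le> r + (n - r)} + PP n r a 0 = kk n r a + PP n r a (0 + (n - r))"
    using cnt[OF a rn L0] by simp
  have PP0: "PP n r a 0 = 0" unfolding PP_def by simp
  have PPL: "PP n r a (n - r) = (\<Sum>y<n-r. mu n r a y)" unfolding PP_def by (rule sum.cong) auto
  have tot: "(\<Sum>y<n-r. mu n r a y) + h = n - r"
    using c0 all PP0 PPL kr kn unfolding h_def by simp
  have hit: "card {d \<in> {..<n-r}. mu n r a d = 0 \<and> (\<forall>u\<in>{1..n-r}.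
      int (PP n r a (d+u)) - int (PP n r a d) + int h \<ge> int u)} = h"
    using hitting[of "n - r" "mu n r a" h, OF L0 tot] unfolding PP_def .
  have seteq: "{d \<in> {..<n-r}. rot n r d a \<in> {b \<in> PF n. run n b = r}} =
     {d \<in> {..<n-r}. mu n r a d = 0 \<and> (\<forall>u\<in>{1..n-r}.
      int (PP n r a (d+u)) - int (PP n r a d) + int h \<ge> int u)}"
  proof (rule Collect_cong, rule conj_cong[OF refl])
    fix d assume "d \<in> {..<n-r}"
    then have dL: "d < n - r" by simp
    define b where "b = rot n r d a"
    have bw: "b \<in> words n" unfolding b_def using rot_words[OF aw rn] .
    have Sb: "{1..r} \<subseteq> b ` {1..n}" using rot_Om[OF a rn] unfolding b_def Om_def by simp
    have e1: "b \<in> {b \<in> PF n. run n b = r} \<longleftrightarrow>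
        (\<forall>i\<in>{1..n}. i \<le> card {j \<in> {1..n}. b j \<le> i}) \<and> Suc r \<notin> b ` {1..n}"
      using run_eq[OF bw r1 rn] Sb bw unfolding PF_def by auto
    have e2: "Suc r \<notin> b ` {1..n} \<longleftrightarrow> mu n r a d = 0"
    proof -
      have "Suc r \<notin> b ` {1..n} \<longleftrightarrow> Suc r + d \<notin> a ` {1..n}"
        unfolding b_def using rot_hit[OF aw rn dL] by simp
      also have "\<dots> \<longleftrightarrow> {j \<in> {1..n}. a j = Suc r + d} = {}" by (rule notin_img_iff)
      also have "\<dots> \<longleftrightarrow> mu n r a d = 0" unfolding mu_def by simp
      finally show ?thesis .
    qed
    have cn: "card {j \<in> {1..n}. b j \<le> r + u} + PP n r a d = kk n r a + PP n r a (d + u)"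
      if "u \<le> n - r" for u
      unfolding b_def using cnt[OF a rn dL that] .
    have e3: "(\<forall>i\<in>{1..n}. i \<le> card {j \<in> {1..n}. b j \<le> i}) \<longleftrightarrow>
       (\<forall>u\<in>{1..n-r}. int (PP n r a (d+u)) - int (PP n r a d) + int h \<ge> int u)"
    proof
      assume A: "\<forall>i\<in>{1..n}. i \<le> card {j \<in> {1..n}. b j \<le> i}"
      show "\<forall>u\<in>{1..n-r}. int (PP n r a (d+u)) - int (PP n r a d) + int h \<ge> int u"
      proof
        fix u assume u: "u \<in> {1..n-r}"
        then have "r + u \<in> {1..n}" using rn by auto
        then have "r + u \<le> card {j \<in> {1..n}. b j \<le> r + u}" using A by blast
        moreover have "card {j \<in> {1..n}. b j \<le> r + u} + PP n r a d = kk n r a + PP n r a (d + u)"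
          using cn u by simp
        ultimately show "int (PP n r a (d+u)) - int (PP n r a d) + int h \<ge> int u"
          using kr unfolding h_def by linarith
      qed
    next
      assume B: "\<forall>u\<in>{1..n-r}. int (PP n r a (d+u)) - int (PP n r a d) + int h \<ge> int u"
      show "\<forall>i\<in>{1..n}. i \<le> card {j \<in> {1..n}. b j \<le> i}"
      proof
        fix i assume i: "i \<in> {1..n}"
        show "i \<le> card {j \<in> {1..n}. b j \<le> i}"
        proof (cases "i \<le> r")
          case True
          then show ?thesis using card_small[OF bw Sb] by simp
        next
          case False
          define u where "u = i - r"
          have u: "u \<in> {1..n-r}" and iu: "i = r + u" using False i unfolding u_def by auto
          have "int (PP n r a (d+u)) - int (PP n r a d) + int h \<ge> int u" using B u by blast
          moreover have "card {j \<in> {1..n}. b j \<le> r + u} + PP n r a d = kk n r a + PP n r a (d + u)"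
            using cn u by simp
          ultimately show ?thesis unfolding iu using kr unfolding h_def by linarith
        qed
      qed
    qed
    show "rot n r d a \<in> {b \<in> PF n. run n b = r} \<longleftrightarrow> mu n r a d = 0 \<and> (\<forall>u\<in>{1..n-r}.
      int (PP n r a (d+u)) - int (PP n r a d) + int h \<ge> int u)"
      using e1 e2 e3 unfolding b_def by blast
  qed
  show ?thesis using hit unfolding seteq h_def .
qed

lemma RW_count:
  assumes r1: "1 \<le> r" and rn: "r < n" and a: "a \<in> Om n r"
  shows "card {d \<in> {..<n-r}. rot n r d a \<in> {b \<in> RW n. run n b = r}}
     = (if a 1 \<le> r then n - card (a ` {1..n}) else 0)"
proof -
  have aw: "a \<in> words n" and Sa: "{1..r} \<subseteq> a ` {1..n}" using a unfolding Om_def by auto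
  have one: "(1::nat) \<in> {1..n}" using rn by simp
  have seteq: "{d \<in> {..<n-r}. rot n r d a \<in> {b \<in> RW n. run n b = r}}
      = {d \<in> {..<n-r}. a 1 \<le> r \<and> Suc r + d \<notin> a ` {1..n}}"
  proof (rule Collect_cong, rule conj_cong[OF refl])
    fix d assume "d \<in> {..<n-r}"
    then have dL: "d < n - r" by simp
    define b where "b = rot n r d a"
    have bw: "b \<in> words n" unfolding b_def using rot_words[OF aw rn] .
    have Sb: "{1..r} \<subseteq> b ` {1..n}" using rot_Om[OF a rn] unfolding b_def Om_def by simp
    have e1: "b \<in> {b \<in> RW n. run n b = r} \<longleftrightarrow> b 1 \<le> r \<and> Suc r \<notin> b ` {1..n}"
      using run_eq[OF bw r1 rn] Sb bw unfolding RW_def by auto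
    have e2: "b 1 \<le> r \<longleftrightarrow> a 1 \<le> r" unfolding b_def rot_app[OF one] gv_small ..
    have e3: "Suc r \<notin> b ` {1..n} \<longleftrightarrow> Suc r + d \<notin> a ` {1..n}"
      unfolding b_def using rot_hit[OF aw rn dL] by simp
    show "rot n r d a \<in> {b \<in> RW n. run n b = r} \<longleftrightarrow> a 1 \<le> r \<and> Suc r + d \<notin> a ` {1..n}"
      using e1 e2 e3 unfolding b_def by blast
  qed
  show ?thesis
  proof (cases "a 1 \<le> r")
    case True
    have "a ` {1..n} \<subseteq> {1..n}" using words_range[OF aw] by auto
    then show ?thesis unfolding seteq using True gap_count[OF _ Sa rn] by simp
  next
    case False
    then show ?thesis unfolding seteq by simp
  qed
qed

definition swp :: "nat \<Rightarrow> nat \<Rightarrow> nat \<Rightarrow> nat" where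
  "swp x y z = (if z = x then y else if z = y then x else z)"

lemma swp_swp: "swp x y (swp x y z) = z"
  unfolding swp_def by auto

lemma swp_mem: "x \<in> A \<Longrightarrow> y \<in> A \<Longrightarrow> z \<in> A \<Longrightarrow> swp x y z \<in> A"
  unfolding swp_def by auto

lemma swp_img: "x \<in> A \<Longrightarrow> y \<in> A \<Longrightarrow> swp x y ` A = A"
proof
  assume "x \<in> A" "y \<in> A"
  then show "swp x y ` A \<subseteq> A" using swp_mem by blast
next
  assume xy: "x \<in> A" "y \<in> A"
  show "A \<subseteq> swp x y ` A"
  proof
    fix z assume "z \<in> A"
    then have "swp x y z \<in> A" "z = swp x y (swp x y z)" using swp_mem[OF xy] swp_swp by auto
    then show "z \<in> swp x y ` A" by blast
  qed
qed

definition ps :: "nat \<Rightarrow> nat \<Rightarrow> (nat \<Rightarrow> nat) \<Rightarrow> (nat \<Rightarrow> nat)" where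
  "ps n i a = restrict (\<lambda>j. a (swp 1 i j)) {1..n}"

lemma ps_words: "a \<in> words n \<Longrightarrow> i \<in> {1..n} \<Longrightarrow> ps n i a \<in> words n"
proof -
  assume a: "a \<in> words n" and i: "i \<in> {1..n}"
  have one: "(1::nat) \<in> {1..n}" using i by auto
  show ?thesis unfolding ps_def words_def
  proof (rule restrict_PiE_iff[THEN iffD2], rule ballI)
    fix j assume j: "j \<in> {1..n}"
    show "a (swp 1 i j) \<in> {1..n}" using words_range[OF a swp_mem[OF one i j]] .
  qed
qed

lemma ps_app: "j \<in> {1..n} \<Longrightarrow> ps n i a j = a (swp 1 i j)"
  unfolding ps_def by simp

lemma ps_img: "i \<in> {1..n} \<Longrightarrow> ps n i a ` {1..n} = a ` {1..n}"
proof -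
  assume i: "i \<in> {1..n}"
  then have one: "(1::nat) \<in> {1..n}" by auto
  have "ps n i a ` {1..n} = a ` (swp 1 i ` {1..n})" using ps_app by (auto simp: image_iff)
  also have "swp 1 i ` {1..n} = {1..n}" by (rule swp_img[OF one i])
  finally show ?thesis .
qed

lemma ps_ps: "a \<in> words n \<Longrightarrow> i \<in> {1..n} \<Longrightarrow> ps n i (ps n i a) = a"
proof -
  assume a: "a \<in> words n" and i: "i \<in> {1..n}"
  have one: "(1::nat) \<in> {1..n}" using i by auto
  show ?thesis
  proof (rule PiE_ext[OF ps_words[OF ps_words[OF a i] i, unfolded words_def] a[unfolded words_def]])
    fix j assume j: "j \<in> {1..n}"
    have "swp 1 i j \<in> {1..n}" using swp_mem[OF one i j] .
    then show "ps n i (ps n i a) j = a j" using j by (simp add: ps_app swp_swp)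
  qed
qed

lemma ps_Om: "a \<in> Om n r \<Longrightarrow> i \<in> {1..n} \<Longrightarrow> ps n i a \<in> Om n r"
  unfolding Om_def using ps_words ps_img by auto

lemma pos_sym:
  assumes n1: "1 \<le> n"
  shows "(\<Sum>a\<in>Om n r. kk n r a) = n * card {a \<in> Om n r. a 1 \<le> r}"
proof -
  have one: "(1::nat) \<in> {1..n}" using n1 by simp
  have "(\<Sum>a\<in>Om n r. kk n r a) = (\<Sum>a\<in>Om n r. \<Sum>i\<in>{1..n}. if a i \<le> r then 1 else 0)"
    unfolding kk_def by (rule sum.cong[OF refl], rule card_filter_sum) simp
  also have "\<dots> = (\<Sum>i\<in>{1..n}. \<Sum>a\<in>Om n r. if a i \<le> r then 1 else 0)" by (rule sum.swap)
  also have "\<dots> = (\<Sum>i\<in>{1..n}. card {a \<in> Om n r. a 1 \<le> r})"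
  proof (rule sum.cong[OF refl])
    fix i assume i: "i \<in> {1..n}"
    have "(\<Sum>a\<in>Om n r. if a i \<le> r then 1 else 0) = card {a \<in> Om n r. a i \<le> r}"
      using Om_finite by (rule card_filter_sum[symmetric])
    also have "\<dots> = card {a \<in> Om n r. a 1 \<le> r}"
    proof (rule bij_betw_same_card[of "ps n i"], rule bij_betwI[where g="ps n i"])
      show "ps n i \<in> {a \<in> Om n r. a i \<le> r} \<rightarrow> {a \<in> Om n r. a 1 \<le> r}"
        using ps_Om[OF _ i] ps_app[OF one] by (auto simp: swp_def)
      show "ps n i \<in> {a \<in> Om n r. a 1 \<le> r} \<rightarrow> {a \<in> Om n r. a i \<le> r}"
        using ps_Om[OF _ i] ps_app[OF i] by (auto simp: swp_def)
      show "ps n i (ps n i x) = x" if "x \<in> {a \<in> Om n r. a i \<le> r}" for x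
        using that ps_ps[OF _ i] unfolding Om_def by auto
      show "ps n i (ps n i y) = y" if "y \<in> {a \<in> Om n r. a 1 \<le> r}" for y
        using that ps_ps[OF _ i] unfolding Om_def by auto
    qed
    finally show "(\<Sum>a\<in>Om n r. if a i \<le> r then 1 else 0) = card {a \<in> Om n r. a 1 \<le> r}" .
  qed
  also have "\<dots> = n * card {a \<in> Om n r. a 1 \<le> r}" by simp
  finally show ?thesis .
qed

definition vs :: "nat \<Rightarrow> nat \<Rightarrow> nat \<Rightarrow> (nat \<Rightarrow> nat) \<Rightarrow> (nat \<Rightarrow> nat)" where
  "vs n u w a = restrict (\<lambda>i. swp u w (a i)) {1..n}"

lemma vs_app: "i \<in> {1..n} \<Longrightarrow> vs n u w a i = swp u w (a i)"
  unfolding vs_def by simp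

lemma vs_words:
  assumes b: "b \<in> words n" and u: "u \<in> {1..n}" and w: "w \<in> {1..n}"
  shows "vs n u w b \<in> words n"
  unfolding vs_def words_def
proof (rule restrict_PiE_iff[THEN iffD2], rule ballI)
  fix i assume i: "i \<in> {1..n}"
  show "swp u w (b i) \<in> {1..n}" using swp_mem[OF u w words_range[OF b i]] .
qed

lemma vs_props:
  assumes a: "a \<in> Om n r" and u: "u \<in> a ` {1..n}" and w: "w \<in> a ` {1..n}"
  shows "vs n u w a \<in> Om n r" "vs n u w a ` {1..n} = a ` {1..n}"
    "vs n u w (vs n u w a) = a"
proof -
  have aw: "a \<in> words n" using a unfolding Om_def by simp
  have sub: "a ` {1..n} \<subseteq> {1..n}" using words_range[OF aw] by auto
  have img: "vs n u w a ` {1..n} = a ` {1..n}"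
  proof -
    have "vs n u w a ` {1..n} = swp u w ` (a ` {1..n})" using vs_app by (auto simp: image_iff)
    also have "\<dots> = a ` {1..n}" by (rule swp_img[OF u w])
    finally show ?thesis .
  qed
  have vw: "vs n u w a \<in> words n"
    unfolding vs_def words_def
  proof (rule restrict_PiE_iff[THEN iffD2], rule ballI)
    fix i assume i: "i \<in> {1..n}"
    have "a i \<in> a ` {1..n}" using i by simp
    then have "swp u w (a i) \<in> a ` {1..n}" using swp_mem[OF u w] by blast
    then show "swp u w (a i) \<in> {1..n}" using sub by blast
  qed
  show "vs n u w a \<in> Om n r" using vw img a unfolding Om_def by simp
  show "vs n u w a ` {1..n} = a ` {1..n}" by (rule img)
  show "vs n u w (vs n u w a) = a"
  proof (rule PiE_ext[OF _ aw[unfolded words_def]])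
    show "vs n u w (vs n u w a) \<in> {1..n} \<rightarrow>\<^sub>E {1..n}"
      using vs_words[OF vw] u w sub unfolding words_def by blast
  next
    fix i assume "i \<in> {1..n}"
    then show "vs n u w (vs n u w a) i = a i" by (simp add: vs_app swp_swp)
  qed
qed

lemma val_sym:
  assumes n1: "1 \<le> n"
  shows "r * card (Om n r) = (\<Sum>a\<in>{a \<in> Om n r. a 1 \<le> r}. card (a ` {1..n}))"
proof -
  have one: "(1::nat) \<in> {1..n}" using n1 by simp
  define f where "f = (\<lambda>(a::nat\<Rightarrow>nat, u::nat). (vs n u (a 1) a, a 1))"
  define g where "g = (\<lambda>(b::nat\<Rightarrow>nat, v::nat). (vs n (b 1) v b, b 1))"
  have bij: "bij_betw f (Om n r \<times> {1..r}) (Sigma {a \<in> Om n r. a 1 \<le> r} (\<lambda>a. a ` {1..n}))"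
  proof (rule bij_betwI[where g=g])
    show "f \<in> Om n r \<times> {1..r} \<rightarrow> Sigma {a \<in> Om n r. a 1 \<le> r} (\<lambda>a. a ` {1..n})"
    proof
      fix p assume "p \<in> Om n r \<times> {1..r}"
      then obtain a u where p: "p = (a, u)" and a: "a \<in> Om n r" and u: "u \<in> {1..r}" by blast
      have uS: "u \<in> a ` {1..n}" using a u unfolding Om_def by auto
      have wS: "a 1 \<in> a ` {1..n}" using one by simp
      note vp = vs_props[OF a uS wS]
      have b1: "vs n u (a 1) a 1 = u" using vs_app[OF one] by (simp add: swp_def)
      show "f p \<in> Sigma {a \<in> Om n r. a 1 \<le> r} (\<lambda>a. a ` {1..n})"
        unfolding p f_def using vp(1,2) b1 u wS by auto
    qed
    show "g \<in> Sigma {a \<in> Om n r. a 1 \<le> r} (\<lambda>a. a ` {1..n}) \<rightarrow> Om n r \<times> {1..r}"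
    proof
      fix q assume "q \<in> Sigma {a \<in> Om n r. a 1 \<le> r} (\<lambda>a. a ` {1..n})"
      then obtain b v where q: "q = (b, v)" and b: "b \<in> Om n r" and b1r: "b 1 \<le> r"
        and v: "v \<in> b ` {1..n}" by blast
      have wS: "b 1 \<in> b ` {1..n}" using one by simp
      note vp = vs_props[OF b wS v]
      have "b 1 \<ge> 1" using words_range[OF _ one, of b] b unfolding Om_def by auto
      then show "g q \<in> Om n r \<times> {1..r}" unfolding q g_def using vp(1) b1r by auto
    qed
    show "g (f x) = x" if xin: "x \<in> Om n r \<times> {1..r}" for x
    proof -
      obtain a u where p: "x = (a, u)" and a: "a \<in> Om n r" and u: "u \<in> {1..r}" using xin by blast
      have uS: "u \<in> a ` {1..n}" using a u unfolding Om_def by auto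
      have wS: "a 1 \<in> a ` {1..n}" using one by simp
      note vp = vs_props[OF a uS wS]
      have b1: "vs n u (a 1) a 1 = u" using vs_app[OF one] by (simp add: swp_def)
      show ?thesis unfolding p f_def g_def using b1 vp(3) by simp
    qed
    show "f (g y) = y" if yin: "y \<in> Sigma {a \<in> Om n r. a 1 \<le> r} (\<lambda>a. a ` {1..n})" for y
    proof -
      obtain b v where q: "y = (b, v)" and b: "b \<in> Om n r" and v: "v \<in> b ` {1..n}" using yin by blast
      have wS: "b 1 \<in> b ` {1..n}" using one by simp
      note vp = vs_props[OF b wS v]
      have a1: "vs n (b 1) v b 1 = v" using vs_app[OF one] by (simp add: swp_def)
      show ?thesis unfolding q f_def g_def using a1 vp(3) by simp
    qed
  qed
  have "r * card (Om n r) = card (Om n r \<times> {1..r})" by (simp add: card_cartesian_product)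
  also have "\<dots> = card (Sigma {a \<in> Om n r. a 1 \<le> r} (\<lambda>a. a ` {1..n}))"
    by (rule bij_betw_same_card[OF bij])
  also have "\<dots> = (\<Sum>a\<in>{a \<in> Om n r. a 1 \<le> r}. card (a ` {1..n}))"
    using Om_finite by (intro card_SigmaI) auto
  finally show ?thesis .
qed

lemma count_eq:
  assumes r1: "1 \<le> r" and rn: "r < n"
  shows "card {b \<in> PF n. run n b = r} = card {b \<in> RW n. run n b = r}"
proof -
  define L where "L = n - r"
  have L0: "L > 0" using rn unfolding L_def by simp
  have PFsub: "{b \<in> PF n. run n b = r} \<subseteq> Om n r"
  proof
    fix b assume b: "b \<in> {b \<in> PF n. run n b = r}"
    then have bw: "b \<in> words n" unfolding PF_def by simp
    show "b \<in> Om n r" using run_eq[OF bw r1 rn] b bw unfolding Om_def by blast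
  qed
  have RWsub: "{b \<in> RW n. run n b = r} \<subseteq> Om n r"
  proof
    fix b assume b: "b \<in> {b \<in> RW n. run n b = r}"
    then have bw: "b \<in> words n" unfolding RW_def by simp
    show "b \<in> Om n r" using run_eq[OF bw r1 rn] b bw unfolding Om_def by blast
  qed
  have kr: "r \<le> kk n r a" if "a \<in> Om n r" for a
    using that card_small[of a n r r] unfolding Om_def kk_def by auto
  have cn: "card (a ` {1..n}) \<le> n" if "a \<in> Om n r" for a
  proof -
    have "card (a ` {1..n}) \<le> card {1..n}" by (rule card_image_le) simp
    then show ?thesis by simp
  qed
  have "L * card {b \<in> PF n. run n b = r} = (\<Sum>a\<in>Om n r. card {d \<in> {..<n-r}. rot n r d a \<in> {b \<in> PF n. run n b = r}})"
    unfolding L_def using double_count[OF rn PFsub] by simp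
  also have "\<dots> = (\<Sum>a\<in>Om n r. kk n r a - r)"
    by (rule sum.cong[OF refl]) (rule PF_count[OF r1 rn])
  also have "\<dots> = (\<Sum>a\<in>Om n r. kk n r a) - (\<Sum>a\<in>Om n r. r)"
    by (rule sum_subtractf_nat) (rule kr)
  also have "\<dots> = n * card {a \<in> Om n r. a 1 \<le> r} - r * card (Om n r)"
    using pos_sym[of n r] rn by (simp add: mult.commute)
  finally have E1: "L * card {b \<in> PF n. run n b = r} = n * card {a \<in> Om n r. a 1 \<le> r} - r * card (Om n r)" .
  have "L * card {b \<in> RW n. run n b = r} = (\<Sum>a\<in>Om n r. card {d \<in> {..<n-r}. rot n r d a \<in> {b \<in> RW n. run n b = r}})"
    unfolding L_def using double_count[OF rn RWsub] by simp
  also have "\<dots> = (\<Sum>a\<in>Om n r. if a 1 \<le> r then n - card (a ` {1..n}) else 0)"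
    by (rule sum.cong[OF refl]) (rule RW_count[OF r1 rn])
  also have "\<dots> = (\<Sum>a\<in>{a \<in> Om n r. a 1 \<le> r}. n - card (a ` {1..n}))"
    using Om_finite by (rule sum.inter_filter[symmetric])
  also have "\<dots> = (\<Sum>a\<in>{a \<in> Om n r. a 1 \<le> r}. n) - (\<Sum>a\<in>{a \<in> Om n r. a 1 \<le> r}. card (a ` {1..n}))"
    by (rule sum_subtractf_nat) (use cn in auto)
  also have "\<dots> = n * card {a \<in> Om n r. a 1 \<le> r} - r * card (Om n r)"
    using val_sym[of n r] rn by (simp add: mult.commute)
  finally have E2: "L * card {b \<in> RW n. run n b = r} = n * card {a \<in> Om n r. a 1 \<le> r} - r * card (Om n r)" .
  from E1 E2 have "L * card {b \<in> PF n. run n b = r} = L * card {b \<in> RW n. run n b = r}" by simp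
  then show ?thesis using L0 by simp
qed

lemma run_le: "run n a \<le> n"
proof (cases "1 \<in> a ` {1..n}")
  case True
  define I where "I = {i \<in> {1..n}. {1..i} \<subseteq> a ` {1..n}}"
  have "n \<ge> 1" using True by auto
  then have "1 \<in> I" using True unfolding I_def by auto
  moreover have fI: "finite I" unfolding I_def by simp
  ultimately have "Max I \<in> I" using Max_in[OF fI] by blast
  moreover have "run n a = Max I" using True unfolding run_def I_def by simp
  ultimately show ?thesis unfolding I_def by simp
next
  case False
  then show ?thesis unfolding run_def by simp
qed

lemma count_eq_all:
  assumes n1: "1 \<le> n" and rn: "r \<le> n"
  shows "card {b \<in> PF n. run n b = r} = card {b \<in> RW n. run n b = r}"
proof -
  have one: "(1::nat) \<in> {1..n}" using n1 by simp
  consider "r = 0" | "1 \<le> r \<and> r < n" | "r = n" using rn by linarith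
  then show ?thesis
  proof cases
    case 1
    have E1: "{b \<in> PF n. run n b = r} = {}"
    proof (rule ccontr)
      assume "{b \<in> PF n. run n b = r} \<noteq> {}"
      then obtain b where b: "b \<in> PF n" "run n b = 0" using 1 by auto
      have bw: "b \<in> words n" using b unfolding PF_def by simp
      have "1 \<le> card {j \<in> {1..n}. b j \<le> 1}" using b one unfolding PF_def by auto
      then have "card {j \<in> {1..n}. b j \<le> 1} \<noteq> 0" by linarith
      then have "{j \<in> {1..n}. b j \<le> 1} \<noteq> {}" by (metis card.empty)
      then obtain j where j: "j \<in> {1..n}" "b j \<le> 1" by auto
      then have "b j = 1" using words_range[OF bw j(1)] by auto
      then have "{1..1} \<subseteq> b ` {1..n}" using j by force
      then have "1 \<le> run n b" using run_ge[OF bw _ n1] by simp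
      then show False using b by simp
    qed
    have E2: "{b \<in> RW n. run n b = r} = {}"
    proof (rule ccontr)
      assume "{b \<in> RW n. run n b = r} \<noteq> {}"
      then obtain b where b: "b \<in> RW n" "run n b = 0" using 1 by auto
      have bw: "b \<in> words n" using b unfolding RW_def by simp
      have "b 1 \<ge> 1" using words_range[OF bw one] by simp
      then show False using b unfolding RW_def by simp
    qed
    show ?thesis unfolding E1 E2 ..
  next
    case 2
    then show ?thesis using count_eq by blast
  next
    case 3
    have A: "{b \<in> PF n. run n b = r} = {b \<in> words n. run n b = n}"
    proof (rule set_eqI, rule iffI)
      fix b assume "b \<in> {b \<in> PF n. run n b = r}"
      then show "b \<in> {b \<in> words n. run n b = n}" using 3 unfolding PF_def by simp
    next
      fix b assume b: "b \<in> {b \<in> words n. run n b = n}"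
      then have bw: "b \<in> words n" and Sb: "{1..n} \<subseteq> b ` {1..n}"
        using run_ge[of b n n] n1 by auto
      have "\<forall>i\<in>{1..n}. i \<le> card {j \<in> {1..n}. b j \<le> i}"
        using card_small[OF bw Sb] by auto
      then show "b \<in> {b \<in> PF n. run n b = r}" using b 3 unfolding PF_def by auto
    qed
    have B: "{b \<in> RW n. run n b = r} = {b \<in> words n. run n b = n}"
    proof (rule set_eqI, rule iffI)
      fix b assume "b \<in> {b \<in> RW n. run n b = r}"
      then show "b \<in> {b \<in> words n. run n b = n}" using 3 unfolding RW_def by simp
    next
      fix b assume b: "b \<in> {b \<in> words n. run n b = n}"
      then have "b 1 \<le> n" using words_range[OF _ one, of b] by auto
      then show "b \<in> {b \<in> RW n. run n b = r}" using b 3 unfolding RW_def by auto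
    qed
    show ?thesis unfolding A B ..
  qed
qed

lemma sum_by_run:
  fixes t :: "'a :: comm_semiring_1"
  assumes A: "A \<subseteq> words n"
  shows "(\<Sum>a\<in>A. t ^ run n a) = (\<Sum>r\<in>{..n}. of_nat (card {a \<in> A. run n a = r}) * t ^ r)"
proof -
  have fA: "finite A" using A words_finite finite_subset by blast
  have "(\<Sum>a\<in>A. t ^ run n a) = (\<Sum>r\<in>{..n}. \<Sum>a\<in>{a \<in> A. run n a = r}. t ^ run n a)"
    using sum.group[OF fA finite_atMost[of n], of "run n" "\<lambda>a. t ^ run n a"] run_le by fastforce
  also have "\<dots> = (\<Sum>r\<in>{..n}. of_nat (card {a \<in> A. run n a = r}) * t ^ r)"
  proof (rule sum.cong[OF refl])
    fix r assume "r \<in> {..n}"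
    have "(\<Sum>a\<in>{a \<in> A. run n a = r}. t ^ run n a) = (\<Sum>a\<in>{a \<in> A. run n a = r}. t ^ r)"
      by (rule sum.cong) auto
    then show "(\<Sum>a\<in>{a \<in> A. run n a = r}. t ^ run n a) = of_nat (card {a \<in> A. run n a = r}) * t ^ r"
      by simp
  qed
  finally show ?thesis .
qed

theorem theorem4p11:
  fixes n :: nat and t :: "'a :: comm_semiring_1"
  assumes "n \<ge> 1"
  shows "(\<Sum>a\<in>PF n. t ^ run n a) = (\<Sum>a\<in>RW n. t ^ run n a)"
proof -
  have "(\<Sum>a\<in>PF n. t ^ run n a) = (\<Sum>r\<in>{..n}. of_nat (card {a \<in> PF n. run n a = r}) * t ^ r)"
    by (rule sum_by_run) (auto simp: PF_def)
  also have "\<dots> = (\<Sum>r\<in>{..n}. of_nat (card {a \<in> RW n. run n a = r}) * t ^ r)"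
    using count_eq_all[OF assms] by simp
  also have "\<dots> = (\<Sum>a\<in>RW n. t ^ run n a)"
    by (rule sum_by_run[symmetric]) (auto simp: RW_def)
  finally show ?thesis .
qed

end
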